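(* Let $\mathbf{C}\in\mathbb{R}^{n\times n}$, $\tilde{\mathbf{S}}\in\mathbb{R}^{m\times n}$, $\mathbf{M}_\rho\in\mathbb{R}^{n\times n}$ and $\mathbf{P}\in\mathbb{R}^{n\times k}$ be matrices such that $\ker\tilde{\mathbf{S}}^\top=\{\mathbf{0}\}$, $\mathbf{C}\tilde{\mathbf{S}}^\top=\mathbf{0}$, and $\mathbf{K}_\rho=\mathbf{P}^\top\mathbf{C}^\top\mathbf{M}_\rho\mathbf{C}\mathbf{P}$ is nonsingular, i.e. $\det(\mathbf{K}_\rho)\neq0$. Then $\mathbf{P}\mathbf{x}$ is not a discrete gradient field, i.e. $\mathbf{P}\mathbf{x}\neq\tilde{\mathbf{S}}^\top\mathbf{y}$ for all $\mathbf{x}\in\mathbb{R}^k\setminus\{\mathbf{0}\}$, $\mathbf{y}\in\mathbb{R}^m\setminus\{\mathbf{0}\}$.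
   Context: In the paper's setting, $\mathbf{C}$ is the discrete curl, $-\tilde{\mathbf{S}}^\top$ the discrete gradient (restricted to degrees of freedom where boundary conditions are imposed) and $\tilde{\mathbf{S}}$ the discrete divergence matrix of a spatial discretisation (FEM with de Rham-conforming bases or FIT); $\mathbf{M}_\rho$ is the resistivity material matrix; and $\mathbf{P}$ is obtained from the projector onto the cotree edges of a tree-cotree gauge in the conducting region by deleting its zero columns. *)

theory Defs
  imports "HOL-Analysis.Analysis"
begin

end

theory Submission
  imports Defs
begin

theorem proposition4:
  fixes C :: "real^'n^'n" and S :: "real^'n^'m" and M :: "real^'n^'n" and P :: "real^'k^'n"
  assumes "{y. transpose S *v y = 0} = {0}"
    and "C ** transpose S = 0"
    and "det (transpose P ** transpose C ** M ** C ** P) \<noteq> 0"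
  shows "\<forall>x y. x \<noteq> 0 \<longrightarrow> y \<noteq> 0 \<longrightarrow> P *v x \<noteq> transpose S *v y"
proof (intro allI impI)
  fix x :: "real^'k" and y :: "real^'m" assume x: "x \<noteq> 0" and y: "(y::real^'m) \<noteq> 0"
  show "P *v x \<noteq> transpose S *v y"
  proof
    assume h: "P *v x = transpose S *v y"
    let ?K = "transpose P ** transpose C ** M ** C ** P"
    have "C *v (P *v x) = 0" proof -
      have "C *v (P *v x) = (C ** transpose S) *v y" unfolding h by (rule matrix_vector_mul_assoc)
      thus ?thesis using assms(2) by simp
    qed
    hence "?K *v x = 0"
      by (simp add: matrix_vector_mul_assoc[symmetric])
    moreover have "invertible ?K" using assms(3) invertible_det_nz by blast
    ultimately have "x = 0"
      by (metis invertible_def matrix_vector_mul_assoc matrix_vector_mul_lid matrix_vector_mult_0_right)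
    with x show False by simp
  qed
qed

end
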